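(* Let $X_0,X_1,\ldots,X_n$ be $n+1$ independent random variables such that $X_j$ follows the Mittag-Leffler distribution with distribution function $F_{X_j}(t)=1-E_{\alpha_j}(-t^{\alpha_j})$, $t\geq0$, where $0<\alpha_j\leq1$ for $0\leq j\leq n$ and $\alpha_0=1$. Then the density function of $T=X_0+X_1+\cdots+X_n$ is $$f_T(t)=\sum_{k=n}^{\infty}(-1)^{n+k}\sum_{\Theta^k_n}\frac{t^{k_0+\sum_{j=1}^nk_j\alpha_j}}{\Gamma\big(1+k_0+\sum_{j=1}^nk_j\alpha_j\big)},\qquad t\geq0,$$ where $\Theta^k_n=\{(k_0,k_1,\ldots,k_n):\ \sum_{j=0}^nk_j=k,\ k_0\in\mathbb{N}_0,\ k_j\in\mathbb{N}_0\setminus\{0\} \text{ for } 1\leq j\leq n\}$.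
   Context: $\mathbb{N}_0$ denotes the set of nonnegative integers. $E_{\beta}(x)=\sum_{k=0}^{\infty}\frac{x^k}{\Gamma(k\beta+1)}$ is the Mittag-Leffler function. *)

theory Defs
  imports "HOL-Probability.Probability"
begin

definition mittag_leffler :: "real \<Rightarrow> real \<Rightarrow> real" where
  "mittag_leffler \<beta> x = (\<Sum>k. x ^ k / Gamma (real k * \<beta> + 1))"

definition Theta :: "nat \<Rightarrow> nat \<Rightarrow> (nat \<Rightarrow> nat) set" where
  "Theta n k = {\<kappa>. (\<forall>j>n. \<kappa> j = 0) \<and> (\<forall>j\<in>{1..n}. 1 \<le> \<kappa> j) \<and> (\<Sum>j\<le>n. \<kappa> j) = k}"

definition ml_sum_term :: "nat \<Rightarrow> (nat \<Rightarrow> real) \<Rightarrow> real \<Rightarrow> nat \<Rightarrow> real" where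
  "ml_sum_term n \<alpha> t k = (-1) ^ (n + k) *
     (\<Sum>\<kappa>\<in>Theta n k.
        t powr (real (\<kappa> 0) + (\<Sum>j=1..n. real (\<kappa> j) * \<alpha> j))
        / Gamma (1 + real (\<kappa> 0) + (\<Sum>j=1..n. real (\<kappa> j) * \<alpha> j)))"

end

theory Submission
  imports Defs
begin

lemma infsum_nat_ennreal: "infsum (f::nat\<Rightarrow>ennreal) UNIV = suminf f"
proof -
  have "(f has_sum infsum f UNIV) UNIV" by (rule has_sum_infsum, rule nonneg_summable_on_complete, simp)
  then have "f sums infsum f UNIV" by (rule has_sum_imp_sums)
  then show ?thesis by (simp add: sums_iff)
qed

lemma infsum_countable_ennreal:
  assumes "countable A" "infinite A"
  shows "infsum (f::_\<Rightarrow>ennreal) A = (\<Sum>i. f (from_nat_into A i))"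
proof -
  have "infsum f A = infsum (f \<circ> from_nat_into A) UNIV"
    using infsum_reindex_bij_betw[OF bij_betw_from_nat_into[OF assms], of f] by (simp add: comp_def)
  also have "\<dots> = (\<Sum>i. f (from_nat_into A i))" by (simp add: infsum_nat_ennreal comp_def)
  finally show ?thesis .
qed

lemma ennreal_infsum_finite:
  assumes nn: "\<And>x. x \<in> A \<Longrightarrow> 0 \<le> f x" and fin: "infsum (\<lambda>x. ennreal (f x)) A \<noteq> \<infinity>"
  shows "f summable_on A" "infsum (\<lambda>x. ennreal (f x)) A = ennreal (infsum f A)"
proof -
  let ?E = "infsum (\<lambda>x. ennreal (f x)) A"
  have le: "ennreal (sum f F) \<le> ?E" if "finite F" "F \<subseteq> A" for F
  proof -
    have "ennreal (sum f F) = sum (\<lambda>x. ennreal (f x)) F"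
      using nn that by (intro sum_ennreal[symmetric]) auto
    also have "\<dots> \<le> ?E" unfolding nonneg_infsum_complete[of A "\<lambda>x. ennreal (f x)", OF zero_le]
      using that by (intro SUP_upper) auto
    finally show ?thesis .
  qed
  have "sum f F \<le> enn2real ?E" if "finite F \<and> F \<subseteq> A" for F
  proof -
    have "ennreal (sum f F) \<le> ?E" using le[of F] that by auto
    then have "enn2real (ennreal (sum f F)) \<le> enn2real ?E"
      using fin by (intro enn2real_mono) (auto simp: top.not_eq_extremum)
    moreover have "0 \<le> sum f F" using that nn by (intro sum_nonneg) auto
    ultimately show ?thesis by simp
  qed
  then show sf: "f summable_on A"
    by (intro nonneg_bdd_above_summable_on nn) (auto simp: bdd_above_def)
  have "ennreal (infsum f A) = (SUP F\<in>{F. finite F \<and> F \<subseteq> A}. ennreal (sum f F))"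
    by (rule infsum_nonneg_is_SUPREMUM_ennreal[OF sf nn])
  also have "\<dots> = (SUP F\<in>{F. finite F \<and> F \<subseteq> A}. sum (\<lambda>x. ennreal (f x)) F)"
    using nn by (intro SUP_cong refl sum_ennreal[symmetric]) auto
  also have "\<dots> = ?E" by (rule nonneg_infsum_complete[symmetric]) simp
  finally show "?E = ennreal (infsum f A)" ..
qed

lemma infsum_count_space_ennreal:
  assumes "countable A"
  shows "infsum (f::_\<Rightarrow>ennreal) A = (\<integral>\<^sup>+x. f x \<partial>count_space A)"
proof (cases "finite A")
  case True then show ?thesis by (simp only: infsum_finite nn_integral_count_space_finite)
next
  case False
  have "(\<integral>\<^sup>+x. f x \<partial>count_space A) = (\<integral>\<^sup>+i. f (from_nat_into A i) \<partial>count_space UNIV)"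
    using nn_integral_bij_count_space[OF bij_betw_from_nat_into[OF assms False], of f] by simp
  also have "\<dots> = (\<Sum>i. f (from_nat_into A i))" by (rule nn_integral_count_space_nat)
  finally show ?thesis using False assms by (simp add: infsum_countable_ennreal)
qed

lemma Gamma_plus1_pos: "(x::real) > 0 \<Longrightarrow> Gamma (x + 1) = x * Gamma x"
  by (rule Gamma_plus1) (auto elim!: nonpos_Ints_cases)

lemma exp_term_le:
  assumes "(0::real) \<le> x" shows "x ^ n / fact n \<le> exp x"
proof -
  have s: "(\<lambda>n. x ^ n /\<^sub>R fact n) sums exp x" by (rule exp_converges)
  have "sum (\<lambda>n. x ^ n /\<^sub>R fact n) {n} \<le> (\<Sum>n. x ^ n /\<^sub>R fact n)"
    using assms by (intro sum_le_suminf[OF sums_summable[OF s]]) auto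
  then show ?thesis using sums_unique[OF s] by (simp add: divide_inverse mult.commute)
qed

lemma Gamma_ge_fact:
  assumes "1 \<le> N" "real N \<le> x"
  shows "fact N \<le> Gamma (x + 1)"
proof -
  have g: "Gamma (real N + 1) = fact N" using Gamma_fact[of N] by (simp add: add.commute)
  show ?thesis
  proof (cases "real N = x")
    case True then show ?thesis using g by simp
  next
    case False
    then have "Gamma (real N + 1) < Gamma (x + 1)"
      using assms by (intro Gamma_real_strict_mono) auto
    then show ?thesis using g by simp
  qed
qed

lemma growth:
  assumes a: "(a::real) > 0" and c: "(c::real) \<ge> 0"
  shows "summable (\<lambda>k. c ^ k / Gamma (real k * a + 1))"
proof -
  define d where "d = max 1 (c powr (1/a))"
  have d1: "d \<ge> 1" by (simp add: d_def)
  define r where "r = (2::real) powr (-a)"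
  have r0: "0 < r" and r1: "r < 1" using a by (auto simp: r_def powr_less_one)
  define C where "C = 2 * d * exp (2 * d)"
  have ck: "c ^ k \<le> d powr (real k * a)" for k
  proof (cases "c = 0")
    case True then show ?thesis using d1 by (cases k) auto
  next
    case False
    then have "c ^ k = (c powr (1/a)) powr (real k * a)"
      using c a by (simp add: powr_powr powr_realpow)
    also have "\<dots> \<le> d powr (real k * a)"
      using a by (intro powr_mono2) (auto simp: d_def)
    finally show ?thesis .
  qed
  define N0 where "N0 = nat \<lceil>1 / a\<rceil>"
  have bound: "norm (c ^ k / Gamma (real k * a + 1)) \<le> C * r ^ k" if k: "k \<ge> N0" for k
  proof -
    have "real N0 \<ge> 1 / a" unfolding N0_def by (rule real_nat_ceiling_ge)
    then have ka1: "real k * a \<ge> 1" using k a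
      by (smt (verit, ccfv_SIG) divide_le_eq of_nat_le_iff mult.commute mult_right_mono)
    define N where "N = nat \<lfloor>real k * a\<rfloor>"
    have N1: "1 \<le> N" using ka1 by (simp add: N_def le_nat_iff)
    have Nle: "real N \<le> real k * a" using ka1 by (simp add: N_def)
    have Ngt: "real k * a < real N + 1" using ka1 by (simp add: N_def)
    have gpos: "0 < Gamma (real k * a + 1)" using ka1 by simp
    have "c ^ k \<le> d powr (real k * a)" by (rule ck)
    also have "\<dots> \<le> d powr (real N + 1)" using d1 Ngt by (intro powr_mono) auto
    also have "\<dots> = d ^ (N + 1)" using d1 powr_realpow[of d "N+1"] by (simp add: add.commute)
    finally have num: "c ^ k \<le> d ^ (N + 1)" .
    have den: "fact N \<le> Gamma (real k * a + 1)" by (rule Gamma_ge_fact[OF N1 Nle])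
    have e: "(2 * d) ^ N / fact N \<le> exp (2 * d)" using d1 by (intro exp_term_le) auto
    then have e2: "d ^ N / fact N \<le> exp (2 * d) / 2 ^ N"
      by (simp add: power_mult_distrib field_simps)
    have p2: "1 / (2::real) ^ N \<le> 2 * r ^ k"
    proof -
      have "(2::real) powr (real k * a) \<le> 2 powr (real N + 1)" using Ngt by (intro powr_mono) auto
      also have "\<dots> = 2 * 2 ^ N" by (simp add: powr_add powr_realpow)
      finally have "2 powr (real k * a) \<le> 2 * 2 ^ N" .
      moreover have "r ^ k = 1 / 2 powr (real k * a)"
      proof -
        have "r ^ k = r powr (real k)" using r0 by (simp add: powr_realpow)
        also have "\<dots> = 2 powr (- (real k * a))" by (simp add: r_def powr_powr mult.commute)
        also have "\<dots> = 1 / 2 powr (real k * a)" by (simp add: powr_minus divide_inverse)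
        finally show ?thesis .
      qed
      ultimately have "1 \<le> r ^ k * (2 * 2 ^ N)"
        using r0 mult_left_mono[of "2 powr (real k * a)" "2 * 2 ^ N" "r ^ k"]
        by (simp add: field_simps)
      then show ?thesis by (simp add: field_simps)
    qed
    have "c ^ k / Gamma (real k * a + 1) \<le> d ^ (N + 1) / fact N"
      using num den gpos c d1 by (intro frac_le) auto
    also have "\<dots> = d * (d ^ N / fact N)" by simp
    also have "\<dots> \<le> d * (exp (2 * d) / 2 ^ N)" using e2 d1 by (intro mult_left_mono) auto
    also have "\<dots> = d * exp (2 * d) * (1 / 2 ^ N)" by simp
    also have "\<dots> \<le> d * exp (2 * d) * (2 * r ^ k)" using p2 d1 by (intro mult_left_mono) auto
    also have "\<dots> = C * r ^ k" by (simp add: C_def)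
    finally show ?thesis using c gpos by simp
  qed
  show ?thesis
    by (rule summable_comparison_test'[OF _ bound]) (use r0 r1 in \<open>auto intro!: summable_mult summable_geometric\<close>)
qed

definition mlc :: "real \<Rightarrow> nat \<Rightarrow> real" where
  "mlc a k = (if k = 0 then 0 else - ((-1) ^ k / Gamma (real k * a + 1)))"
definition mla :: "real \<Rightarrow> nat \<Rightarrow> real" where
  "mla a k = (if k = 0 then 0 else 1 / Gamma (real k * a + 1))"
definition mlG :: "real \<Rightarrow> real \<Rightarrow> real" where
  "mlG a u = (\<Sum>k. mlc a k * u ^ k)"
definition mlG' :: "real \<Rightarrow> real \<Rightarrow> real" where
  "mlG' a u = (\<Sum>k. diffs (mlc a) k * u ^ k)"
definition fa :: "real \<Rightarrow> real \<Rightarrow> real" where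
  "fa a t = mlG' a (t powr a) * (a * t powr (a - 1))"
definition gg :: "real \<Rightarrow> nat \<Rightarrow> real \<Rightarrow> real" where
  "gg a n t = t powr (real (Suc n) * a - 1) / Gamma (real (Suc n) * a)"

lemma growth_abs:
  assumes "a > 0" shows "summable (\<lambda>k. \<bar>x\<bar> ^ k / Gamma (real k * a + 1))"
  using growth[OF assms, of "\<bar>x\<bar>"] by simp

lemma mla_summable: assumes "a > 0" shows "summable (\<lambda>k. mla a k * x ^ k)"
proof (rule summable_comparison_test'[OF growth_abs[OF assms, of x], of 0])
  fix k :: nat
  have g: "Gamma (real k * a + 1) > 0" using assms by (intro Gamma_real_pos) (auto intro: add_nonneg_pos)
  show "norm (mla a k * x ^ k) \<le> \<bar>x\<bar> ^ k / Gamma (real k * a + 1)"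
    using g by (auto simp: mla_def abs_mult power_abs)
qed

lemma mlc_summable: assumes "a > 0" shows "summable (\<lambda>k. mlc a k * x ^ k)"
proof (rule summable_comparison_test'[OF growth_abs[OF assms, of x], of 0])
  fix k :: nat
  have g: "Gamma (real k * a + 1) > 0" using assms by (intro Gamma_real_pos) (auto intro: add_nonneg_pos)
  show "norm (mlc a k * x ^ k) \<le> \<bar>x\<bar> ^ k / Gamma (real k * a + 1)"
    using g by (auto simp: mlc_def abs_mult power_abs)
qed

lemma ml_summable: assumes "a > 0" shows "summable (\<lambda>k. x ^ k / Gamma (real k * a + 1))"
proof (rule summable_comparison_test'[OF growth_abs[OF assms, of x], of 0])
  fix k :: nat
  have g: "Gamma (real k * a + 1) > 0" using assms by (intro Gamma_real_pos) (auto intro: add_nonneg_pos)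
  show "norm (x ^ k / Gamma (real k * a + 1)) \<le> \<bar>x\<bar> ^ k / Gamma (real k * a + 1)"
    using g by (auto simp: abs_mult power_abs)
qed

lemma mlE_eq:
  assumes "a > 0"
  shows "1 - mittag_leffler a (- u) = mlG a u"
proof -
  let ?f = "\<lambda>k. (- u) ^ k / Gamma (real k * a + 1)"
  have s: "summable ?f" by (rule ml_summable[OF assms])
  have "mittag_leffler a (- u) = ?f 0 + (\<Sum>k. ?f (Suc k))"
    unfolding mittag_leffler_def using suminf_split_head[OF s] by simp
  also have "?f 0 = 1" by simp
  finally have m: "1 - mittag_leffler a (- u) = - (\<Sum>k. ?f (Suc k))" by simp
  have s2: "summable (\<lambda>k. mlc a k * u ^ k)" by (rule mlc_summable[OF assms])
  have "mlG a u = mlc a 0 * u ^ 0 + (\<Sum>k. mlc a (Suc k) * u ^ Suc k)"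
    unfolding mlG_def using suminf_split_head[OF s2] by simp
  also have "\<dots> = (\<Sum>k. - ?f (Suc k))"
    by (simp add: mlc_def power_minus[of u] del: power_Suc)
  also have "\<dots> = - (\<Sum>k. ?f (Suc k))"
  proof -
    have hs: "summable (\<lambda>k. ?f (Suc k))" by (rule summable_Suc_iff[of ?f, THEN iffD2, OF s])
    show ?thesis by (rule suminf_minus[OF hs])
  qed
  finally show ?thesis using m by simp
qed

lemma mlG_deriv: assumes "a > 0" shows "(mlG a has_field_derivative mlG' a u) (at u)"
  unfolding mlG_def[abs_def] mlG'_def
  by (rule termdiffs_strong_converges_everywhere) (rule mlc_summable[OF assms])

lemma mlG'_cont: assumes "a > 0" shows "isCont (mlG' a) u"
proof -
  have "\<And>x. summable (\<lambda>n. diffs (mlc a) n * x ^ n)"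
    by (rule termdiff_converges_all) (rule mlc_summable[OF assms])
  then have "(mlG' a has_field_derivative (\<Sum>n. diffs (diffs (mlc a)) n * u ^ n)) (at u)"
    unfolding mlG'_def[abs_def] by (rule termdiffs_strong_converges_everywhere)
  then show ?thesis by (rule DERIV_isCont)
qed

lemma F_deriv:
  assumes "a > 0" "t > 0"
  shows "((\<lambda>t. mlG a (t powr a)) has_real_derivative fa a t) (at t)"
  unfolding fa_def
  by (rule DERIV_chain2[OF mlG_deriv[OF assms(1)] has_real_derivative_powr[OF assms(2)]])

lemma fa_cont:
  assumes "a > 0" "t > 0"
  shows "isCont (fa a) t"
proof -
  have "isCont (\<lambda>t. mlG' a (t powr a)) t"
    using assms by (intro isCont_o2[OF _ mlG'_cont[OF assms(1)]] continuous_intros) auto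
  then show ?thesis unfolding fa_def[abs_def] using assms by (intro continuous_intros) auto
qed

lemma diffs_mlc: "diffs (mlc a) n = (-1) ^ n * diffs (mla a) n"
  by (simp add: diffs_def mlc_def mla_def)

lemma diffs_mla_term:
  assumes "a > 0" "t > 0"
  shows "diffs (mla a) n * (t powr a) ^ n * (a * t powr (a - 1)) = gg a n t"
proof -
  let ?q = "real (Suc n) * a"
  have q: "?q > 0" using assms by simp
  have G: "Gamma (?q + 1) = ?q * Gamma ?q" by (rule Gamma_plus1_pos[OF q])
  have Gp: "Gamma ?q > 0" using q by simp
  have "(t powr a) ^ n * t powr (a - 1) = t powr (?q - 1)"
    using assms by (simp add: powr_realpow[symmetric] powr_powr powr_add[symmetric] algebra_simps)
  moreover have d: "diffs (mla a) n = 1 / (a * Gamma ?q)"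
  proof -
    have "diffs (mla a) n = real (Suc n) / Gamma (?q + 1)"
      by (simp add: diffs_def mla_def)
    also have "\<dots> = real (Suc n) / (real (Suc n) * (a * Gamma ?q))"
      unfolding G by (simp only: mult.assoc)
    also have "\<dots> = 1 / (a * Gamma ?q)"
      by (rule nonzero_divide_mult_cancel_left) simp
    finally show ?thesis .
  qed
  ultimately show ?thesis
    using Gp assms unfolding gg_def d by (simp add: field_simps)
qed

lemma gg_nonneg: "a > 0 \<Longrightarrow> t > 0 \<Longrightarrow> gg a n t \<ge> 0"
  unfolding gg_def by (intro divide_nonneg_pos) auto

lemma gg_summable:
  assumes "a > 0" "t > 0"
  shows "summable (\<lambda>n. gg a n t)"
proof -
  have "summable (\<lambda>n. diffs (mla a) n * (t powr a) ^ n)"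
    by (rule termdiff_converges_all) (rule mla_summable[OF assms(1)])
  then have "summable (\<lambda>n. diffs (mla a) n * (t powr a) ^ n * (a * t powr (a - 1)))"
    by (rule summable_mult2)
  then show ?thesis using diffs_mla_term[OF assms] by simp
qed

lemma fa_sums:
  assumes "a > 0" "t > 0"
  shows "(\<lambda>n. (-1) ^ n * gg a n t) sums fa a t"
proof -
  have "summable (\<lambda>n. diffs (mlc a) n * (t powr a) ^ n)"
    by (rule termdiff_converges_all) (rule mlc_summable[OF assms(1)])
  then have "(\<lambda>n. diffs (mlc a) n * (t powr a) ^ n * (a * t powr (a - 1))) sums fa a t"
    unfolding fa_def mlG'_def by (intro sums_mult2 summable_sums)
  moreover have "diffs (mlc a) n * (t powr a) ^ n * (a * t powr (a - 1)) = (-1) ^ n * gg a n t" for n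
    using diffs_mla_term[OF assms, of n] by (simp add: diffs_mlc)
  ultimately show ?thesis by simp
qed

lemma mlG_zero: "mlG a 0 = 0"
  unfolding mlG_def by (simp add: mlc_def)

lemma mlG'_measurable[measurable]: "a > 0 \<Longrightarrow> mlG' a \<in> borel_measurable borel"
  by (rule borel_measurable_continuous_onI) (use mlG'_cont in \<open>auto intro!: continuous_at_imp_continuous_on\<close>)

lemma deriv_mono_nonneg:
  fixes F :: "real \<Rightarrow> real"
  assumes mono: "\<And>x y. x \<le> y \<Longrightarrow> F x \<le> F y" and d: "(F has_real_derivative D) (at t)"
  shows "0 \<le> D"
proof -
  have "((\<lambda>h. (F (t + h) - F t) / h) \<longlongrightarrow> D) (at 0)"
    using d by (simp add: DERIV_def)
  then have "((\<lambda>h. (F (t + h) - F t) / h) \<longlongrightarrow> D) (at_right 0)"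
    by (rule filterlim_mono) (auto simp: at_le)
  moreover have "\<forall>\<^sub>F h in at_right 0. 0 \<le> (F (t + h) - F t) / h"
    unfolding eventually_at_right_field
    by (intro exI[of _ 1]) (auto intro!: divide_nonneg_pos mono simp: algebra_simps)
  ultimately show ?thesis
    by (rule tendsto_lowerbound) simp
qed

lemma (in prob_space) mlE_distributed:
  assumes Xm: "X \<in> borel_measurable M" and a: "0 < a"
    and cdf: "\<And>t. measure M {\<omega> \<in> space M. X \<omega> \<le> t} =
             (if 0 \<le> t then 1 - mittag_leffler a (- (t powr a)) else 0)"
  shows "distributed M lborel X (\<lambda>t. ennreal (if 0 < t then fa a t else 0))"
    and "\<And>t. 0 < t \<Longrightarrow> 0 \<le> fa a t"
proof -
  define F where "F t = measure M {\<omega> \<in> space M. X \<omega> \<le> t}" for t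
  define H where "H t = mlG a (t powr a)" for t
  have FH: "F t = H t" if "0 \<le> t" for t
    using that by (simp add: F_def cdf H_def mlE_eq[OF a])
  have Fneg: "F t = 0" if "t < 0" for t using that by (simp add: F_def cdf)
  have H0: "H 0 = 0" by (simp add: H_def mlG_zero)
  have Fmono: "F x \<le> F y" if "x \<le> y" for x y
    unfolding F_def using that Xm by (intro finite_measure_mono) auto
  have Hd: "(H has_real_derivative fa a t) (at t)" if "0 < t" for t
    unfolding H_def[abs_def] by (rule F_deriv[OF a that])
  have Fd: "(F has_real_derivative fa a t) (at t)" if "0 < t" for t
    by (rule has_field_derivative_transform_within_open[OF Hd[OF that], of "{0<..}"])
       (use that FH in auto)
  show fnn: "0 \<le> fa a t" if "0 < t" for t
    by (rule deriv_mono_nonneg[OF _ Fd[OF that]]) (rule Fmono)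
  define g where "g t = ennreal (if 0 < t then fa a t else 0)" for t
  have gm[measurable]: "g \<in> borel_measurable borel"
    unfolding g_def fa_def using a by measurable
  have Hcont: "isCont H t" if "0 < t" for t by (rule DERIV_isCont[OF Hd[OF that]])
  have H_right0: "(H \<longlongrightarrow> 0) (at_right 0)"
  proof -
    have "((\<lambda>t. t powr a) \<longlongrightarrow> 0) (at_right (0::real))"
      by (rule tendsto_zero_powrI) (auto intro!: tendsto_intros a eventually_at_rightI[of 0 1])
    moreover have "isCont (mlG a) 0" by (rule DERIV_isCont[OF mlG_deriv[OF a]])
    ultimately have "((\<lambda>t. mlG a (t powr a)) \<longlongrightarrow> mlG a 0) (at_right 0)"
      by (intro isCont_tendsto_compose[of 0 "mlG a"]) auto
    then show ?thesis by (simp add: H_def[abs_def] mlG_zero)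
  qed
  have intval: "(\<integral>\<^sup>+t. g t * indicator {..x} t \<partial>lborel) = ennreal (F x)" for x
  proof (cases "0 < x")
    case False
    then have z: "(\<lambda>t. g t * indicator {..x} t) = (\<lambda>t. 0)"
      by (auto simp: g_def indicator_def fun_eq_iff)
    have "F x = 0" using False Fneg[of x] FH[of 0] H0 by (cases "x = 0") (auto simp: not_less)
    then show ?thesis by (simp add: z)
  next
    case True
    have p1: "(0::ereal) < ereal x" using True by simp
    have p2: "\<And>t. 0 < ereal t \<Longrightarrow> ereal t < ereal x \<Longrightarrow> (H has_real_derivative fa a t) (at t)"
      using Hd by simp
    have p3: "\<And>t. 0 < ereal t \<Longrightarrow> ereal t < ereal x \<Longrightarrow> isCont (fa a) t"
      using fa_cont[OF a] by simp
    have p4: "AE t in lborel. 0 < ereal t \<longrightarrow> ereal t < ereal x \<longrightarrow> 0 \<le> fa a t"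
      using fnn by (intro AE_I2) simp
    have p5: "((H \<circ> real_of_ereal) \<longlongrightarrow> 0) (at_right (0::ereal))"
      using H_right0 by (simp add: zero_ereal_def ereal_tendsto_simps)
    have p6: "((H \<circ> real_of_ereal) \<longlongrightarrow> H x) (at_left (ereal x))"
      using Hcont[OF True] by (simp add: ereal_tendsto_simps isCont_def filterlim_at_split)
    note ftc = interval_integral_FTC_nonneg[OF p1 p2 p3 p4 p5 p6]
    have si: "set_integrable lborel {0<..<x} (fa a)" using ftc(1) by (simp add: zero_ereal_def)
    have iv: "(LINT t:{0<..<x}|lborel. fa a t) = H x"
      using ftc(2) True by (simp add: interval_lebesgue_integral_def zero_ereal_def)
    have "(\<integral>\<^sup>+t. g t * indicator {..x} t \<partial>lborel) = (\<integral>\<^sup>+t\<in>{0<..<x}. ennreal (fa a t) \<partial>lborel)"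
      using AE_lborel_singleton[of x]
      by (intro nn_integral_cong_AE) (auto elim!: eventually_mono simp: g_def indicator_def)
    also have "\<dots> = (\<integral>\<^sup>+t. ennreal (indicator {0<..<x} t * fa a t) \<partial>lborel)"
      by (intro nn_integral_cong) (auto simp: indicator_def)
    also have "\<dots> = ennreal (\<integral>t. indicator {0<..<x} t * fa a t \<partial>lborel)"
      using si fnn unfolding set_integrable_def
      by (intro nn_integral_eq_integral) (auto intro!: AE_I2 simp: indicator_def)
    also have "\<dots> = ennreal (LINT t:{0<..<x}|lborel. fa a t)"
      by (simp add: set_lebesgue_integral_def)
    also have "\<dots> = ennreal (F x)" using iv FH True by simp
    finally show ?thesis .
  qed
  have fbX: "finite_borel_measure (distr M borel X)"
    using Xm by (intro real_distribution.finite_borel_measure_M real_distribution_distr) simp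
  have Fle1: "F x \<le> 1" for x unfolding F_def by simp
  have fbD: "finite_borel_measure (density lborel g)"
  proof -
    have "emeasure (density lborel g) UNIV = (SUP n. emeasure (density lborel g) {..real n})"
    proof -
      have "(\<Union>n. {..real n}) = UNIV" by (auto intro: real_arch_simple)
      moreover have "(SUP n. emeasure (density lborel g) {..real n}) = emeasure (density lborel g) (\<Union>n. {..real n})"
        by (intro SUP_emeasure_incseq) (auto simp: incseq_def)
      ultimately show ?thesis by simp
    qed
    also have "\<dots> \<le> 1"
      using Fle1 by (intro SUP_least) (simp add: emeasure_density intval)
    finally have "emeasure (density lborel g) (space (density lborel g)) \<noteq> \<infinity>"
      by (auto simp: top_unique)
    then have "finite_measure (density lborel g)" by (rule finite_measureI)
    then show ?thesis unfolding finite_borel_measure_def finite_borel_measure_axioms_def by simp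
  qed
  have "distr M borel X = density lborel g"
  proof (rule cdf_unique'[OF fbX fbD])
    show "cdf (distr M borel X) = cdf (density lborel g)"
    proof
      fix x
      have "cdf (distr M borel X) x = measure M (X -` {..x} \<inter> space M)"
        using Xm by (simp add: cdf_def measure_distr)
      also have "\<dots> = F x" unfolding F_def by (intro arg_cong[where f="measure M"]) auto
      also have "\<dots> = cdf (density lborel g) x"
        using intval[of x] F_def by (simp add: cdf_def measure_def emeasure_density)
      finally show "cdf (distr M borel X) x = cdf (density lborel g) x" .
    qed
  qed
  then have "distr M lborel X = density lborel g"
    by (metis distr_cong sets_lborel)
  then show "distributed M lborel X (\<lambda>t. ennreal (if 0 < t then fa a t else 0))"
    unfolding distributed_def g_def[symmetric] using Xm by simp
qed

lemma beta_nn: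
  assumes z: "z > 0" and p: "p \<ge> 0" and q: "q > 0"
  shows "(\<integral>\<^sup>+y. ennreal (indicator {0<..<z} y * ((z - y) powr p / Gamma (1 + p) * (y powr (q - 1) / Gamma q))) \<partial>lborel)
         = ennreal (z powr (p + q) / Gamma (1 + (p + q)))"
proof -
  define h where "h t = t powr (q - 1) * (1 - t) powr p" for t
  have B: "(h has_integral Beta q (p + 1)) {0..1}"
    using has_integral_Beta_real[of q "p + 1"] q p unfolding h_def[abs_def] by simp
  have img: "(\<lambda>x. x / (1 / z)) ` {0..1} = {0..z}"
  proof
    show "(\<lambda>x. x / (1 / z)) ` {0..1} \<subseteq> {0..z}" using z by (auto simp: mult_le_cancel_right1)
    show "{0..z} \<subseteq> (\<lambda>x. x / (1 / z)) ` {0..1}"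
    proof
      fix y assume "y \<in> {0..z}"
      then show "y \<in> (\<lambda>x. x / (1 / z)) ` {0..1}"
        using z by (intro image_eqI[of _ _ "y / z"]) (auto simp: field_simps)
    qed
  qed
  have S: "((\<lambda>y. h (1 / z * y)) has_integral z * Beta q (p + 1)) {0..z}"
    using has_integral_stretch_real[OF B, of "1 / z"] z img by simp
  define c where "c = z powr (p + q - 1) / (Gamma (1 + p) * Gamma q)"
  have S2: "((\<lambda>y. h (1 / z * y) * c) has_integral z * Beta q (p + 1) * c) {0<..<z}"
    using has_integral_mult_left[OF S] by (simp add: has_integral_Icc_iff_Ioo)
  have val: "z * Beta q (p + 1) * c = z powr (p + q) / Gamma (1 + (p + q))"
  proof -
    have "Gamma (1 + p) > 0" "Gamma q > 0" using p q by simp_all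
    moreover have "z * z powr (p + q - 1) = z powr (p + q)"
      using z by (simp add: powr_add[symmetric] powr_mult_base)
    ultimately show ?thesis
      by (simp add: c_def Beta_def field_simps add_ac)
  qed
  have eq: "h (1 / z * y) * c = (z - y) powr p / Gamma (1 + p) * (y powr (q - 1) / Gamma q)"
    if "y \<in> {0<..<z}" for y
  proof -
    have y: "0 < y" "y < z" using that by auto
    have "h (1 / z * y) = (y / z) powr (q - 1) * ((z - y) / z) powr p"
      using z by (simp add: h_def field_simps)
    also have "\<dots> = y powr (q - 1) * (z - y) powr p / (z powr (q - 1) * z powr p)"
      using y z by (simp add: powr_divide)
    also have "z powr (q - 1) * z powr p = z powr (p + q - 1)"
    proof -
      have e: "q - 1 + p = p + q - 1" by simp
      show ?thesis using powr_add[of z "q - 1" p] unfolding e by simp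
    qed
    finally show ?thesis using z by (simp add: c_def field_simps)
  qed
  have S3: "((\<lambda>y. (z - y) powr p / Gamma (1 + p) * (y powr (q - 1) / Gamma q))
            has_integral z powr (p + q) / Gamma (1 + (p + q))) {0<..<z}"
    using has_integral_cong[of "{0<..<z}", OF eq] S2 val by simp
  have S4: "((\<lambda>y. indicator {0<..<z} y * ((z - y) powr p / Gamma (1 + p) * (y powr (q - 1) / Gamma q)))
            has_integral z powr (p + q) / Gamma (1 + (p + q))) UNIV"
  proof -
    let ?f = "\<lambda>y. (z - y) powr p / Gamma (1 + p) * (y powr (q - 1) / Gamma q)"
    have "(\<lambda>y. indicator {0<..<z} y * ?f y) = (\<lambda>y. if y \<in> {0<..<z} then ?f y else 0)"
      by (auto simp: fun_eq_iff indicator_def)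
    then show ?thesis using has_integral_restrict_UNIV[of "{0<..<z}" ?f] S3 by simp
  qed
  show ?thesis
    by (rule nn_integral_has_integral_lborel[OF _ _ S4])
       (use p q in \<open>auto simp: indicator_def intro!: mult_nonneg_nonneg divide_nonneg_pos\<close>)
qed

lemma measurable_nn_integral_count_space:
  assumes I: "countable I" and f: "\<And>i. i \<in> I \<Longrightarrow> (\<lambda>x. f x i) \<in> borel_measurable N"
  shows "(\<lambda>x. \<integral>\<^sup>+i. f x i \<partial>count_space I) \<in> borel_measurable N"
proof (cases "finite I")
  case True
  then have eq: "(\<lambda>x. \<integral>\<^sup>+i. f x i \<partial>count_space I) = (\<lambda>x. \<Sum>i\<in>I. f x i)"
    by (simp only: nn_integral_count_space_finite)
  show ?thesis unfolding eq by (rule borel_measurable_sum) (rule f)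
next
  case False
  have inI: "from_nat_into I i \<in> I" for i
    using False I by (metis finite.emptyI from_nat_into)
  have eq: "(\<lambda>x. \<integral>\<^sup>+i. f x i \<partial>count_space I) = (\<lambda>x. \<Sum>i. f x (from_nat_into I i))"
  proof
    fix x
    have "(\<integral>\<^sup>+i. f x i \<partial>count_space I) = (\<integral>\<^sup>+i. f x (from_nat_into I i) \<partial>count_space UNIV)"
      using nn_integral_bij_count_space[OF bij_betw_from_nat_into[OF I False], of "f x"] by simp
    also have "\<dots> = (\<Sum>i. f x (from_nat_into I i))" by (rule nn_integral_count_space_nat)
    finally show "(\<integral>\<^sup>+i. f x i \<partial>count_space I) = (\<Sum>i. f x (from_nat_into I i))" .
  qed
  show ?thesis unfolding eq by (rule borel_measurable_suminf_order) (rule f[OF inI])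
qed

lemma nn_integral_count_space_prod:
  assumes A: "countable A" and B: "countable B"
  shows "(\<integral>\<^sup>+x. f x \<partial>count_space A) * (\<integral>\<^sup>+y. g y \<partial>count_space B)
       = (\<integral>\<^sup>+p. f (fst p) * g (snd p) \<partial>count_space (A \<times> B))"
proof -
  interpret sB: sigma_finite_measure "count_space B"
    by (rule sigma_finite_measure_count_space_countable[OF B])
  have "(\<integral>\<^sup>+x. f x \<partial>count_space A) * (\<integral>\<^sup>+y. g y \<partial>count_space B)
      = (\<integral>\<^sup>+x. f x * (\<integral>\<^sup>+y. g y \<partial>count_space B) \<partial>count_space A)"
    by (rule nn_integral_multc[symmetric]) simp
  also have "\<dots> = (\<integral>\<^sup>+x. \<integral>\<^sup>+y. f x * g y \<partial>count_space B \<partial>count_space A)"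
    by (intro nn_integral_cong nn_integral_cmult[symmetric]) simp
  also have "\<dots> = (\<integral>\<^sup>+p. f (fst p) * g (snd p) \<partial>(count_space A \<Otimes>\<^sub>M count_space B))"
    using sB.nn_integral_fst[of "\<lambda>p. f (fst p) * g (snd p)" "count_space A"]
    by (simp add: pair_measure_countable[OF A B])
  also have "\<dots> = (\<integral>\<^sup>+p. f (fst p) * g (snd p) \<partial>count_space (A \<times> B))"
    by (simp add: pair_measure_countable[OF A B])
  finally show ?thesis .
qed

lemma nn_integral_count_space_Un:
  assumes "A \<inter> B = {}"
  shows "(\<integral>\<^sup>+x. f x \<partial>count_space (A \<union> B)) = (\<integral>\<^sup>+x. f x \<partial>count_space A) + (\<integral>\<^sup>+x. f x \<partial>count_space B)"
proof -
  have "(\<integral>\<^sup>+x. f x \<partial>count_space (A \<union> B)) = (\<integral>\<^sup>+x. f x * indicator (A \<union> B) x \<partial>count_space UNIV)"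
    by (rule nn_integral_count_space_indicator[where X="A \<union> B"]) simp
  also have "\<dots> = (\<integral>\<^sup>+x. f x * indicator A x + f x * indicator B x \<partial>count_space UNIV)"
    using assms by (intro nn_integral_cong) (auto simp: indicator_def)
  also have "\<dots> = (\<integral>\<^sup>+x. f x * indicator A x \<partial>count_space UNIV) + (\<integral>\<^sup>+x. f x * indicator B x \<partial>count_space UNIV)"
    by (rule nn_integral_add) auto
  also have "\<dots> = (\<integral>\<^sup>+x. f x \<partial>count_space A) + (\<integral>\<^sup>+x. f x \<partial>count_space B)"
    by (simp add: nn_integral_count_space_indicator[where X=A] nn_integral_count_space_indicator[where X=B])
  finally show ?thesis .
qed

lemma nn_integral_count_space_subset_le:
  assumes "A \<subseteq> B"
  shows "(\<integral>\<^sup>+x. f x \<partial>count_space A) \<le> (\<integral>\<^sup>+x. f x \<partial>count_space B)"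
proof -
  have "(\<integral>\<^sup>+x. f x \<partial>count_space A) = (\<integral>\<^sup>+x. f x * indicator A x \<partial>count_space UNIV)"
    by (rule nn_integral_count_space_indicator[where X=A]) simp
  also have "\<dots> \<le> (\<integral>\<^sup>+x. f x * indicator B x \<partial>count_space UNIV)"
    using assms by (intro nn_integral_mono) (auto simp: indicator_def)
  also have "\<dots> = (\<integral>\<^sup>+x. f x \<partial>count_space B)"
    by (rule nn_integral_count_space_indicator[where X=B, symmetric]) simp
  finally show ?thesis .
qed

definition TA :: "nat \<Rightarrow> (nat \<Rightarrow> nat) set" where
  "TA m = {\<kappa>. (\<forall>j>m. \<kappa> j = 0) \<and> (\<forall>j\<in>{1..m}. 1 \<le> \<kappa> j)}"
definition TAp :: "nat \<Rightarrow> bool \<Rightarrow> (nat \<Rightarrow> nat) set" where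
  "TAp m s = {\<kappa> \<in> TA m. even (m + (\<Sum>j\<le>m. \<kappa> j)) = s}"
definition ex :: "(nat \<Rightarrow> real) \<Rightarrow> nat \<Rightarrow> (nat \<Rightarrow> nat) \<Rightarrow> real" where
  "ex \<alpha> m \<kappa> = real (\<kappa> 0) + (\<Sum>j=1..m. real (\<kappa> j) * \<alpha> j)"
definition ww :: "(nat \<Rightarrow> real) \<Rightarrow> nat \<Rightarrow> real \<Rightarrow> (nat \<Rightarrow> nat) \<Rightarrow> real" where
  "ww \<alpha> m t \<kappa> = t powr ex \<alpha> m \<kappa> / Gamma (1 + ex \<alpha> m \<kappa>)"
definition EE :: "(nat \<Rightarrow> real) \<Rightarrow> nat \<Rightarrow> bool \<Rightarrow> real \<Rightarrow> ennreal" where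
  "EE \<alpha> m s t = (\<integral>\<^sup>+\<kappa>. ennreal (ww \<alpha> m t \<kappa>) \<partial>count_space (TAp m s))"
definition FF :: "real \<Rightarrow> bool \<Rightarrow> real \<Rightarrow> ennreal" where
  "FF a s t = (\<integral>\<^sup>+n. ennreal (gg a n t) \<partial>count_space {n. even n = s})"

lemma countable_TA: "countable (TA m)"
proof -
  have "TA m \<subseteq> (\<lambda>g j. if j \<le> m then g j else 0) ` (PiE {..m} (\<lambda>_. UNIV :: nat set))"
  proof
    fix \<kappa> assume k: "\<kappa> \<in> TA m"
    have "\<kappa> = (\<lambda>j. if j \<le> m then restrict \<kappa> {..m} j else 0)"
      using k by (auto simp: TA_def fun_eq_iff)
    then show "\<kappa> \<in> (\<lambda>g j. if j \<le> m then g j else 0) ` (PiE {..m} (\<lambda>_. UNIV))"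
      by (intro image_eqI[of _ _ "restrict \<kappa> {..m}"]) auto
  qed
  moreover have "countable (PiE {..m} (\<lambda>_. UNIV :: nat set))" by (intro countable_PiE) auto
  ultimately show ?thesis by (rule countable_subset[OF _ countable_image])
qed

lemma countable_TAp: "countable (TAp m s)"
  by (rule countable_subset[OF _ countable_TA[of m]]) (auto simp: TAp_def)

lemma ex_nonneg: "(\<And>j. j \<in> {1..m} \<Longrightarrow> 0 \<le> \<alpha> j) \<Longrightarrow> 0 \<le> ex \<alpha> m \<kappa>"
  unfolding ex_def by (intro add_nonneg_nonneg sum_nonneg mult_nonneg_nonneg) auto

lemma ww_nonneg: "0 \<le> ex \<alpha> m \<kappa> \<Longrightarrow> 0 \<le> ww \<alpha> m t \<kappa>"
  unfolding ww_def by (intro divide_nonneg_pos) (auto intro: add_pos_nonneg)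

lemma ww_mono: "0 \<le> ex \<alpha> m \<kappa> \<Longrightarrow> 0 \<le> t \<Longrightarrow> t \<le> t' \<Longrightarrow> ww \<alpha> m t \<kappa> \<le> ww \<alpha> m t' \<kappa>"
  unfolding ww_def by (intro divide_right_mono powr_mono2) (auto intro: less_imp_le add_pos_nonneg)

lemma EE_mono:
  assumes "\<And>j. j \<in> {1..m} \<Longrightarrow> 0 \<le> \<alpha> j" "0 \<le> t" "t \<le> t'"
  shows "EE \<alpha> m s t \<le> EE \<alpha> m s t'"
  unfolding EE_def using assms by (intro nn_integral_mono ennreal_leI ww_mono ex_nonneg) auto

lemma ex_upd:
  assumes "\<kappa> \<in> TA m"
  shows "ex \<alpha> (Suc m) (\<kappa>(Suc m := v)) = ex \<alpha> m \<kappa> + real v * \<alpha> (Suc m)"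
proof -
  have "(\<Sum>j=1..Suc m. real ((\<kappa>(Suc m := v)) j) * \<alpha> j) = (\<Sum>j=1..m. real ((\<kappa>(Suc m := v)) j) * \<alpha> j) + real v * \<alpha> (Suc m)"
    by (simp add: sum.cl_ivl_Suc)
  also have "(\<Sum>j=1..m. real ((\<kappa>(Suc m := v)) j) * \<alpha> j) = (\<Sum>j=1..m. real (\<kappa> j) * \<alpha> j)"
    by (intro sum.cong) auto
  finally show ?thesis unfolding ex_def by simp
qed

lemma sum_upd_le: "(\<Sum>j\<le>m. (\<kappa>(Suc m := v)) j) = (\<Sum>j\<le>m. \<kappa> j)"
  by (intro sum.cong) auto

lemma bij_TAp:
  "bij_betw (\<lambda>p. (fst p)(Suc m := Suc (snd p)))
     (TAp m s \<times> {n. even n = True} \<union> TAp m (\<not> s) \<times> {n. even n = False}) (TAp (Suc m) s)"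
proof (rule bij_betw_byWitness[where f'="\<lambda>\<kappa>. (\<kappa>(Suc m := 0), \<kappa> (Suc m) - 1)"])
  show "\<forall>p\<in>TAp m s \<times> {n. even n = True} \<union> TAp m (\<not> s) \<times> {n. even n = False}.
          ((fst p)(Suc m := Suc (snd p), Suc m := 0), ((fst p)(Suc m := Suc (snd p))) (Suc m) - 1) = p"
  proof
    fix p :: "(nat \<Rightarrow> nat) \<times> nat" assume "p \<in> TAp m s \<times> {n. even n = True} \<union> TAp m (\<not> s) \<times> {n. even n = False}"
    then have "fst p \<in> TA m" by (auto simp: TAp_def)
    then have "fst p (Suc m) = 0" by (simp add: TA_def)
    then have "(fst p)(Suc m := Suc (snd p), Suc m := 0) = fst p" by (auto simp: fun_eq_iff)
    then show "((fst p)(Suc m := Suc (snd p), Suc m := 0), ((fst p)(Suc m := Suc (snd p))) (Suc m) - 1) = p"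
      by (simp add: prod_eq_iff)
  qed
  show "\<forall>\<kappa>\<in>TAp (Suc m) s. (fst (\<kappa>(Suc m := 0), \<kappa> (Suc m) - 1))
          (Suc m := Suc (snd (\<kappa>(Suc m := 0), \<kappa> (Suc m) - 1))) = \<kappa>"
  proof
    fix \<kappa> assume "\<kappa> \<in> TAp (Suc m) s"
    then have "\<kappa> (Suc m) \<ge> 1" by (auto simp: TAp_def TA_def)
    then show "(fst (\<kappa>(Suc m := 0), \<kappa> (Suc m) - 1))
          (Suc m := Suc (snd (\<kappa>(Suc m := 0), \<kappa> (Suc m) - 1))) = \<kappa>"
      by (auto simp: fun_eq_iff)
  qed
  show "(\<lambda>p. (fst p)(Suc m := Suc (snd p))) ` (TAp m s \<times> {n. even n = True} \<union> TAp m (\<not> s) \<times> {n. even n = False})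
        \<subseteq> TAp (Suc m) s"
  proof
    fix x assume "x \<in> (\<lambda>p. (fst p)(Suc m := Suc (snd p))) ` (TAp m s \<times> {n. even n = True} \<union> TAp m (\<not> s) \<times> {n. even n = False})"
    then obtain \<kappa> and n :: nat where x: "x = \<kappa>(Suc m := Suc n)"
      and kn: "(\<kappa>, n) \<in> TAp m s \<times> {n. even n = True} \<union> TAp m (\<not> s) \<times> {n. even n = False}"
      by auto
    from kn have k: "\<kappa> \<in> TA m" and par: "even (m + (\<Sum>j\<le>m. \<kappa> j) + n) = s"
      by (auto simp: TAp_def)
    have "\<kappa>(Suc m := Suc n) \<in> TA (Suc m)"
      using k by (auto simp: TA_def)
    moreover have "(\<Sum>j\<le>Suc m. (\<kappa>(Suc m := Suc n)) j) = (\<Sum>j\<le>m. \<kappa> j) + Suc n"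
      by (simp add: sum_upd_le)
    ultimately show "x \<in> TAp (Suc m) s"
      using par x by (simp add: TAp_def) blast
  qed
  show "(\<lambda>\<kappa>. (\<kappa>(Suc m := 0), \<kappa> (Suc m) - 1)) ` TAp (Suc m) s
        \<subseteq> TAp m s \<times> {n. even n = True} \<union> TAp m (\<not> s) \<times> {n. even n = False}"
  proof
    fix x assume "x \<in> (\<lambda>\<kappa>. (\<kappa>(Suc m := 0), \<kappa> (Suc m) - 1)) ` TAp (Suc m) s"
    then obtain \<kappa> where x: "x = (\<kappa>(Suc m := 0), \<kappa> (Suc m) - 1)" and kk: "\<kappa> \<in> TAp (Suc m) s"
      by auto
    from kk have k: "\<kappa> \<in> TA (Suc m)" and par: "even (Suc m + (\<Sum>j\<le>Suc m. \<kappa> j)) = s"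
      by (auto simp: TAp_def)
    have k1: "\<kappa> (Suc m) \<ge> 1" using k by (auto simp: TA_def)
    have km: "\<kappa>(Suc m := 0) \<in> TA m" using k by (auto simp: TA_def)
    have S: "(\<Sum>j\<le>m. (\<kappa>(Suc m := 0)) j) = (\<Sum>j\<le>m. \<kappa> j)" by (rule sum_upd_le)
    have par2: "even (m + (\<Sum>j\<le>m. \<kappa> j) + (\<kappa> (Suc m) - 1)) = s"
      using par k1 by (simp add: algebra_simps)
    show "x \<in> TAp m s \<times> {n. even n = True} \<union> TAp m (\<not> s) \<times> {n. even n = False}"
      unfolding x using km par2 S by (cases "even (\<kappa> (Suc m) - 1)") (auto simp: TAp_def)
  qed
qed

lemma EE0: "EE \<alpha> 0 s t = FF 1 s t"
proof -
  have b: "bij_betw (\<lambda>n. (\<lambda>j. if j = 0 then n else 0)) {n. even n = s} (TAp 0 s)"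
    by (rule bij_betw_byWitness[where f'="\<lambda>\<kappa>. \<kappa> 0"]) (auto simp: TAp_def TA_def fun_eq_iff)
  have "EE \<alpha> 0 s t = (\<integral>\<^sup>+n. ennreal (ww \<alpha> 0 t (\<lambda>j. if j = 0 then n else 0)) \<partial>count_space {n. even n = s})"
    unfolding EE_def by (rule nn_integral_bij_count_space[OF b, symmetric])
  also have "\<dots> = FF 1 s t"
    unfolding FF_def by (intro nn_integral_cong) (simp add: ww_def ex_def gg_def add.commute)
  finally show ?thesis .
qed

lemma ww_nonneg': "0 \<le> ww \<alpha> m t \<kappa> \<or> True" by simp

lemma gg_nonneg_all: "a > 0 \<Longrightarrow> 0 \<le> gg a n t"
  unfolding gg_def by (intro divide_nonneg_pos) auto

lemma EE_rec:
  assumes z: "z > 0" and a: "\<alpha> (Suc m) > 0" and nn: "\<And>j. j \<in> {1..m} \<Longrightarrow> 0 \<le> \<alpha> j"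
  shows "(\<integral>\<^sup>+y. indicator {0<..<z} y * (EE \<alpha> m s (z - y) * FF (\<alpha> (Suc m)) True y
            + EE \<alpha> m (\<not> s) (z - y) * FF (\<alpha> (Suc m)) False y) \<partial>lborel) = EE \<alpha> (Suc m) s z"
proof -
  define a where "a = \<alpha> (Suc m)"
  have a0: "a > 0" using a by (simp add: a_def)
  define G where "G y p = ennreal (indicator {0<..<z} y * (ww \<alpha> m (z - y) (fst p) * gg a (snd p) y))"
    for y :: real and p :: "(nat \<Rightarrow> nat) \<times> nat"
  have wwn: "0 \<le> ww \<alpha> m t \<kappa>" for t \<kappa> by (intro ww_nonneg ex_nonneg nn) auto
  have ggn: "0 \<le> gg a n t" for n t by (rule gg_nonneg_all[OF a0])
  define K1 where "K1 = TAp m s \<times> {n::nat. even n = True}"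
  define K2 where "K2 = TAp m (\<not> s) \<times> {n::nat. even n = False}"
  have cK: "countable (TAp m s' \<times> {n::nat. even n = b})" for s' b
    by (intro countable_SIGMA countable_TAp) auto
  have pt: "indicator {0<..<z} y * (EE \<alpha> m s' (z - y) * FF a b y)
          = (\<integral>\<^sup>+p. G y p \<partial>count_space (TAp m s' \<times> {n. even n = b}))" for s' b y
  proof -
    have "EE \<alpha> m s' (z - y) * FF a b y
        = (\<integral>\<^sup>+p. ennreal (ww \<alpha> m (z - y) (fst p)) * ennreal (gg a (snd p) y) \<partial>count_space (TAp m s' \<times> {n. even n = b}))"
      unfolding EE_def FF_def by (rule nn_integral_count_space_prod[OF countable_TAp]) simp
    then have "indicator {0<..<z} y * (EE \<alpha> m s' (z - y) * FF a b y)
        = (\<integral>\<^sup>+p. indicator {0<..<z} y * (ennreal (ww \<alpha> m (z - y) (fst p)) * ennreal (gg a (snd p) y)) \<partial>count_space (TAp m s' \<times> {n. even n = b}))"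
      by (simp add: nn_integral_cmult)
    also have "\<dots> = (\<integral>\<^sup>+p. G y p \<partial>count_space (TAp m s' \<times> {n. even n = b}))"
      using wwn ggn by (intro nn_integral_cong) (auto simp: G_def indicator_def ennreal_mult)
    finally show ?thesis .
  qed
  have disj: "K1 \<inter> K2 = {}" by (auto simp: K1_def K2_def)
  have cK12: "countable (K1 \<union> K2)" unfolding K1_def K2_def using cK by blast
  have Gm: "(\<lambda>y. G y p) \<in> borel_measurable lborel" for p
    unfolding G_def gg_def ww_def by measurable
  have "(\<integral>\<^sup>+y. indicator {0<..<z} y * (EE \<alpha> m s (z - y) * FF a True y + EE \<alpha> m (\<not> s) (z - y) * FF a False y) \<partial>lborel)
      = (\<integral>\<^sup>+y. (\<integral>\<^sup>+p. G y p \<partial>count_space K1) + (\<integral>\<^sup>+p. G y p \<partial>count_space K2) \<partial>lborel)"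
    unfolding K1_def K2_def by (intro nn_integral_cong) (simp add: distrib_left pt)
  also have "\<dots> = (\<integral>\<^sup>+y. \<integral>\<^sup>+p. G y p \<partial>count_space (K1 \<union> K2) \<partial>lborel)"
    by (simp add: nn_integral_count_space_Un[OF disj])
  also have "\<dots> = (\<integral>\<^sup>+p. \<integral>\<^sup>+y. G y p \<partial>lborel \<partial>count_space (K1 \<union> K2))"
    by (rule nn_integral_count_space_nn_integral[OF cK12 Gm])
  also have "\<dots> = (\<integral>\<^sup>+p. ennreal (ww \<alpha> (Suc m) z ((fst p)(Suc m := Suc (snd p)))) \<partial>count_space (K1 \<union> K2))"
  proof (intro nn_integral_cong)
    fix p assume "p \<in> space (count_space (K1 \<union> K2))"
    then have k: "fst p \<in> TA m" by (auto simp: K1_def K2_def TAp_def)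
    define e where "e = ex \<alpha> m (fst p)"
    define q where "q = real (Suc (snd p)) * a"
    have e0: "0 \<le> e" unfolding e_def by (intro ex_nonneg nn) auto
    have q0: "0 < q" unfolding q_def using a0 by simp
    have "(\<integral>\<^sup>+y. G y p \<partial>lborel) = (\<integral>\<^sup>+y. ennreal (indicator {0<..<z} y * ((z - y) powr e / Gamma (1 + e) * (y powr (q - 1) / Gamma q))) \<partial>lborel)"
      unfolding G_def ww_def gg_def e_def q_def by simp
    also have "\<dots> = ennreal (z powr (e + q) / Gamma (1 + (e + q)))"
      by (rule beta_nn[OF z e0 q0])
    also have "e + q = ex \<alpha> (Suc m) ((fst p)(Suc m := Suc (snd p)))"
      unfolding e_def q_def a_def by (simp add: ex_upd[OF k])
    finally show "(\<integral>\<^sup>+y. G y p \<partial>lborel) = ennreal (ww \<alpha> (Suc m) z ((fst p)(Suc m := Suc (snd p))))"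
      by (simp add: ww_def)
  qed
  also have "\<dots> = EE \<alpha> (Suc m) s z"
    unfolding EE_def K1_def K2_def
    by (rule nn_integral_bij_count_space[OF bij_TAp[of m s], where f="\<lambda>\<kappa>. ennreal (ww \<alpha> (Suc m) z \<kappa>)"])
  finally show ?thesis by (simp add: a_def)
qed

lemma EE_meas[measurable]: "(\<lambda>t. EE \<alpha> m s t) \<in> borel_measurable borel"
  unfolding EE_def
  by (rule measurable_nn_integral_count_space[OF countable_TAp]) (unfold ww_def, measurable)

lemma FF_meas[measurable]: "(\<lambda>t. FF a s t) \<in> borel_measurable borel"
  unfolding FF_def
  by (rule measurable_nn_integral_count_space) (auto simp: gg_def)

lemma FF_eq_suminf:
  assumes a: "a > 0" and t: "t > 0"
  shows "FF a s t = ennreal (\<Sum>n. if even n = s then gg a n t else 0)"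
    and "summable (\<lambda>n. if even n = s then gg a n t else 0)"
proof -
  show sm: "summable (\<lambda>n. if even n = s then gg a n t else 0)"
    by (rule summable_comparison_test'[OF gg_summable[OF a t], of 0])
       (use gg_nonneg[OF a t] in auto)
  have "FF a s t = (\<integral>\<^sup>+n. ennreal (gg a n t) * indicator {n. even n = s} n \<partial>count_space UNIV)"
    unfolding FF_def by (rule nn_integral_count_space_indicator) simp
  also have "\<dots> = (\<Sum>n. ennreal (gg a n t) * indicator {n. even n = s} n)"
    by (rule nn_integral_count_space_nat)
  also have "\<dots> = (\<Sum>n. ennreal (if even n = s then gg a n t else 0))"
    by (intro suminf_cong) (auto simp: indicator_def)
  also have "\<dots> = ennreal (\<Sum>n. if even n = s then gg a n t else 0)"
    by (rule suminf_ennreal2[OF _ sm]) (use gg_nonneg[OF a t] in auto)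
  finally show "FF a s t = ennreal (\<Sum>n. if even n = s then gg a n t else 0)" .
qed

lemma FF_fin: "a > 0 \<Longrightarrow> t > 0 \<Longrightarrow> FF a s t \<noteq> \<infinity>"
  by (simp add: FF_eq_suminf)

lemma FF_real:
  assumes a: "a > 0" and t: "t > 0"
  shows "enn2real (FF a True t) - enn2real (FF a False t) = fa a t"
proof -
  define e where "e = (\<lambda>n. if even n then gg a n t else 0)"
  define od where "od = (\<lambda>n. if odd n then gg a n t else 0)"
  have sT: "summable e" using FF_eq_suminf(2)[OF a t, of True] by (simp add: e_def)
  have sF: "summable od" using FF_eq_suminf(2)[OF a t, of False] by (simp add: od_def)
  have s1: "(\<lambda>n. e n - od n) sums (suminf e - suminf od)"
    by (rule sums_diff[OF summable_sums[OF sT] summable_sums[OF sF]])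
  have eo: "e n - od n = (-1) ^ n * gg a n t" for n by (simp add: e_def od_def)
  have nn: "0 \<le> suminf e" "0 \<le> suminf od"
    using gg_nonneg[OF a t] by (intro suminf_nonneg[OF sT] suminf_nonneg[OF sF], simp add: e_def od_def)+
  have "(\<lambda>n. (-1) ^ n * gg a n t) sums (suminf e - suminf od)" using s1 eo by simp
  then have "fa a t = suminf e - suminf od"
    using fa_sums[OF a t] sums_unique2 by blast
  moreover have "FF a True t = ennreal (suminf e)" using FF_eq_suminf(1)[OF a t, of True]
    by (simp add: e_def)
  moreover have "FF a False t = ennreal (suminf od)" using FF_eq_suminf(1)[OF a t, of False]
    by (simp add: od_def)
  ultimately show ?thesis using nn by simp
qed

lemma FF_total: "FF a True t + FF a False t = (\<integral>\<^sup>+n. ennreal (gg a n t) \<partial>count_space UNIV)"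
proof -
  have u: "{n::nat. even n = True} \<union> {n. even n = False} = UNIV" by auto
  have d: "{n::nat. even n = True} \<inter> {n. even n = False} = {}" by auto
  show ?thesis unfolding FF_def
    using nn_integral_count_space_Un[OF d, where f="\<lambda>n. ennreal (gg a n t)"]
    unfolding u by (rule sym)
qed

lemma beta0:
  assumes z: "z > 0" and q: "q > 0"
  shows "(\<integral>\<^sup>+y. ennreal (indicator {0<..<z} y * (y powr (q - 1) / Gamma q)) \<partial>lborel) = ennreal (z powr q / Gamma (1 + q))"
proof -
  have "(\<integral>\<^sup>+y. ennreal (indicator {0<..<z} y * (y powr (q - 1) / Gamma q)) \<partial>lborel)
      = (\<integral>\<^sup>+y. ennreal (indicator {0<..<z} y * ((z - y) powr 0 / Gamma (1 + 0) * (y powr (q - 1) / Gamma q))) \<partial>lborel)"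
    by (intro nn_integral_cong) (auto simp: indicator_def)
  also have "\<dots> = ennreal (z powr (0 + q) / Gamma (1 + (0 + q)))"
    by (rule beta_nn[OF z _ q]) simp
  finally show ?thesis by simp
qed

lemma FF_int_fin:
  assumes a: "a > 0" and z: "z > 0"
  shows "(\<integral>\<^sup>+y. indicator {0<..<z} y * (FF a True y + FF a False y) \<partial>lborel) \<noteq> \<infinity>"
proof -
  have "(\<integral>\<^sup>+y. indicator {0<..<z} y * (FF a True y + FF a False y) \<partial>lborel)
      = (\<integral>\<^sup>+y. \<integral>\<^sup>+n. ennreal (indicator {0<..<z} y * gg a n y) \<partial>count_space UNIV \<partial>lborel)"
    unfolding FF_total
    by (intro nn_integral_cong)
       (auto simp: nn_integral_cmult[symmetric] indicator_def intro!: nn_integral_cong)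
  also have "\<dots> = (\<integral>\<^sup>+n. \<integral>\<^sup>+y. ennreal (indicator {0<..<z} y * gg a n y) \<partial>lborel \<partial>count_space UNIV)"
    by (rule nn_integral_count_space_nn_integral) (auto simp: gg_def)
  also have "\<dots> = (\<integral>\<^sup>+n. ennreal (z powr (real (Suc n) * a) / Gamma (1 + real (Suc n) * a)) \<partial>count_space UNIV)"
  proof (intro nn_integral_cong)
    fix n :: nat
    have q: "real (Suc n) * a > 0" using a by simp
    show "(\<integral>\<^sup>+y. ennreal (indicator {0<..<z} y * gg a n y) \<partial>lborel)
        = ennreal (z powr (real (Suc n) * a) / Gamma (1 + real (Suc n) * a))"
      unfolding gg_def by (rule beta0[OF z q])
  qed
  also have "\<dots> = (\<Sum>n. ennreal (z powr (real (Suc n) * a) / Gamma (1 + real (Suc n) * a)))"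
    by (rule nn_integral_count_space_nat)
  also have "\<dots> = ennreal (\<Sum>n. z powr (real (Suc n) * a) / Gamma (1 + real (Suc n) * a))"
  proof (rule suminf_ennreal2)
    fix n :: nat
    have "1 + real (Suc n) * a > 0" using a by (intro add_pos_pos) auto
    then show "0 \<le> z powr (real (Suc n) * a) / Gamma (1 + real (Suc n) * a)"
      by (intro divide_nonneg_pos Gamma_real_pos) auto
  next
    have "summable (\<lambda>n. mla a (Suc n) * (z powr a) ^ Suc n)"
      using mla_summable[OF a, of "z powr a"] by (subst summable_Suc_iff)
    moreover have "mla a (Suc n) * (z powr a) ^ Suc n = z powr (real (Suc n) * a) / Gamma (1 + real (Suc n) * a)" for n
    proof -
      have zp: "0 < z powr a" using z by simp
      have "(z powr a) ^ Suc n = (z powr a) powr real (Suc n)"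
        using powr_realpow[OF zp, of "Suc n"] by simp
      also have "\<dots> = z powr (real (Suc n) * a)" by (simp add: powr_powr mult.commute)
      finally show ?thesis by (simp add: mla_def add.commute)
    qed
    ultimately show "summable (\<lambda>n. z powr (real (Suc n) * a) / Gamma (1 + real (Suc n) * a))" by simp
  qed
  finally show ?thesis by simp
qed

lemma EE_fin:
  assumes "\<And>j. j \<in> {1..m} \<Longrightarrow> 0 < \<alpha> j" and "t > 0"
  shows "EE \<alpha> m s t \<noteq> \<infinity>"
  using assms
proof (induction m arbitrary: s t)
  case 0
  have "FF 1 s t \<noteq> \<infinity>" by (rule FF_fin) (use 0 in auto)
  then show ?case by (simp add: EE0)
next
  case (Suc m)
  define a where "a = \<alpha> (Suc m)"
  have a: "a > 0" using Suc.prems by (simp add: a_def)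
  have nn: "\<And>j. j \<in> {1..m} \<Longrightarrow> 0 \<le> \<alpha> j" using Suc.prems by (auto intro: less_imp_le)
  define C where "C = EE \<alpha> m s t + EE \<alpha> m (\<not> s) t"
  have Cfin: "C \<noteq> \<infinity>" unfolding C_def using Suc by (simp add: ennreal_add_eq_top)
  have "EE \<alpha> (Suc m) s t = (\<integral>\<^sup>+y. indicator {0<..<t} y * (EE \<alpha> m s (t - y) * FF a True y
            + EE \<alpha> m (\<not> s) (t - y) * FF a False y) \<partial>lborel)"
    using EE_rec[OF Suc.prems(2), of \<alpha> m s] a nn by (simp add: a_def)
  also have "\<dots> \<le> (\<integral>\<^sup>+y. C * (indicator {0<..<t} y * (FF a True y + FF a False y)) \<partial>lborel)"
  proof (intro nn_integral_mono)
    fix y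
    show "indicator {0<..<t} y * (EE \<alpha> m s (t - y) * FF a True y + EE \<alpha> m (\<not> s) (t - y) * FF a False y)
          \<le> C * (indicator {0<..<t} y * (FF a True y + FF a False y))"
    proof (cases "y \<in> {0<..<t}")
      case True
      then have y: "0 \<le> t - y" "t - y \<le> t" by auto
      have e1: "EE \<alpha> m s (t - y) \<le> C"
      proof -
        have "EE \<alpha> m s (t - y) \<le> EE \<alpha> m s t" by (rule EE_mono[OF nn y])
        also have "\<dots> \<le> C" unfolding C_def by (rule add_increasing2[OF zero_le order_refl])
        finally show ?thesis .
      qed
      have e2: "EE \<alpha> m (\<not> s) (t - y) \<le> C"
      proof -
        have "EE \<alpha> m (\<not> s) (t - y) \<le> EE \<alpha> m (\<not> s) t" by (rule EE_mono[OF nn y])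
        also have "\<dots> \<le> C" unfolding C_def by (rule add_increasing[OF zero_le order_refl])
        finally show ?thesis .
      qed
      have "EE \<alpha> m s (t - y) * FF a True y + EE \<alpha> m (\<not> s) (t - y) * FF a False y
            \<le> C * FF a True y + C * FF a False y"
        by (intro add_mono mult_right_mono e1 e2) simp_all
      then show ?thesis using True by (simp add: distrib_left)
    qed simp
  qed
  also have "\<dots> = C * (\<integral>\<^sup>+y. indicator {0<..<t} y * (FF a True y + FF a False y) \<partial>lborel)"
    by (rule nn_integral_cmult) simp
  also have "\<dots> < \<infinity>"
    using Cfin FF_int_fin[OF a Suc.prems(2)] by (simp add: ennreal_mult_less_top top.not_eq_extremum)
  finally show ?case by simp
qed

definition DD :: "(nat \<Rightarrow> real) \<Rightarrow> nat \<Rightarrow> real \<Rightarrow> real" where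
  "DD \<alpha> m t = enn2real (EE \<alpha> m True t) - enn2real (EE \<alpha> m False t)"

lemma finite_Theta: "finite (Theta n k)"
proof (rule finite_subset)
  show "Theta n k \<subseteq> {f. \<forall>x. (x \<in> {..n} \<longrightarrow> f x \<in> {..k}) \<and> (x \<notin> {..n} \<longrightarrow> f x = 0)}"
  proof
    fix \<kappa> assume k: "\<kappa> \<in> Theta n k"
    have "\<kappa> x \<le> k" if "x \<le> n" for x
    proof -
      have "\<kappa> x \<le> (\<Sum>j\<le>n. \<kappa> j)" using that by (intro member_le_sum) auto
      then show ?thesis using k by (simp add: Theta_def)
    qed
    then show "\<kappa> \<in> {f. \<forall>x. (x \<in> {..n} \<longrightarrow> f x \<in> {..k}) \<and> (x \<notin> {..n} \<longrightarrow> f x = 0)}"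
      using k by (auto simp: Theta_def)
  qed
  show "finite {f. \<forall>x. (x \<in> {..n} \<longrightarrow> f x \<in> {..k}) \<and> (x \<notin> {..n} \<longrightarrow> f x = (0::nat))}"
    by (rule finite_set_of_finite_funs) auto
qed

lemma Theta_empty: "k < n \<Longrightarrow> Theta n k = {}"
proof (rule ccontr)
  assume k: "k < n" and "Theta n k \<noteq> {}"
  then obtain \<kappa> where kk: "\<kappa> \<in> Theta n k" by auto
  have "n = (\<Sum>j\<in>{1..n}. (1::nat))" by simp
  also have "\<dots> \<le> (\<Sum>j\<in>{1..n}. \<kappa> j)" using kk by (intro sum_mono) (auto simp: Theta_def)
  also have "\<dots> \<le> (\<Sum>j\<le>n. \<kappa> j)" by (intro sum_mono2) auto
  also have "\<dots> = k" using kk by (simp add: Theta_def)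
  finally show False using k by simp
qed

lemma EE_real:
  assumes "\<And>j. j \<in> {1..m} \<Longrightarrow> 0 < \<alpha> j" "t > 0"
  shows "(ww \<alpha> m t) summable_on (TAp m s)" "enn2real (EE \<alpha> m s t) = infsum (ww \<alpha> m t) (TAp m s)"
proof -
  have nn: "\<And>\<kappa>. 0 \<le> ww \<alpha> m t \<kappa>" using assms by (intro ww_nonneg ex_nonneg) (auto intro: less_imp_le)
  have eq: "EE \<alpha> m s t = infsum (\<lambda>\<kappa>. ennreal (ww \<alpha> m t \<kappa>)) (TAp m s)"
    unfolding EE_def by (rule infsum_count_space_ennreal[OF countable_TAp, symmetric])
  have "EE \<alpha> m s t \<noteq> \<infinity>" by (rule EE_fin) (use assms in auto)
  then have fin: "infsum (\<lambda>\<kappa>. ennreal (ww \<alpha> m t \<kappa>)) (TAp m s) \<noteq> \<infinity>"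
    using eq by simp
  show "(ww \<alpha> m t) summable_on (TAp m s)" by (rule ennreal_infsum_finite(1)[OF nn fin])
  show "enn2real (EE \<alpha> m s t) = infsum (ww \<alpha> m t) (TAp m s)"
    using ennreal_infsum_finite(2)[OF nn fin] eq by (simp add: infsum_nonneg nn)
qed

lemma series_sums:
  assumes apos: "\<And>j. j \<in> {1..n} \<Longrightarrow> 0 < \<alpha> j" and t: "t > 0"
  shows "(\<lambda>k. ml_sum_term n \<alpha> t (k + n)) sums DD \<alpha> n t"
proof -
  define g where "g \<kappa> = (-1) ^ (n + (\<Sum>j\<le>n. \<kappa> j)) * ww \<alpha> n t \<kappa>" for \<kappa> :: "nat \<Rightarrow> nat"
  define IT where "IT = infsum (ww \<alpha> n t) (TAp n True)"
  define IF where "IF = infsum (ww \<alpha> n t) (TAp n False)"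
  have hT: "(g has_sum IT) (TAp n True)"
  proof -
    have "((ww \<alpha> n t) has_sum IT) (TAp n True)"
      unfolding IT_def by (rule has_sum_infsum[OF EE_real(1)[OF apos t]])
    then show ?thesis
      by (subst has_sum_cong[where g="ww \<alpha> n t"]) (auto simp: g_def TAp_def)
  qed
  have hF: "(g has_sum (- IF)) (TAp n False)"
  proof -
    have "((ww \<alpha> n t) has_sum IF) (TAp n False)"
      unfolding IF_def by (rule has_sum_infsum[OF EE_real(1)[OF apos t]])
    then have "((\<lambda>\<kappa>. - ww \<alpha> n t \<kappa>) has_sum - IF) (TAp n False)"
      by (simp add: has_sum_uminus)
    then show ?thesis
      by (subst has_sum_cong[where g="\<lambda>\<kappa>. - ww \<alpha> n t \<kappa>"]) (auto simp: g_def TAp_def)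
  qed
  have TAeq: "TA n = TAp n True \<union> TAp n False" by (auto simp: TAp_def)
  have hTA: "(g has_sum (IT - IF)) (TA n)"
    using has_sum_Un_disjoint[OF hT hF] unfolding TAeq by (auto simp: TAp_def)
  have bij: "bij_betw (\<lambda>\<kappa>. ((\<Sum>j\<le>n. \<kappa> j), \<kappa>)) (TA n) (Sigma UNIV (Theta n))"
    by (rule bij_betw_byWitness[where f'=snd]) (auto simp: TA_def Theta_def)
  have hS: "((\<lambda>p. g (snd p)) has_sum (IT - IF)) (Sigma UNIV (Theta n))"
    using has_sum_reindex_bij_betw[OF bij, of "\<lambda>p. g (snd p)"] hTA by simp
  have "((\<lambda>k. sum g (Theta n k)) has_sum (IT - IF)) UNIV"
  proof (rule has_sum_SigmaD[OF hS])
    fix k :: nat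
    show "((\<lambda>\<kappa>. g (snd (k, \<kappa>))) has_sum sum g (Theta n k)) (Theta n k)"
      using has_sum_finite[OF finite_Theta, of g n k] by simp
  qed
  moreover have "sum g (Theta n k) = ml_sum_term n \<alpha> t k" for k
    unfolding ml_sum_term_def sum_distrib_left
    by (intro sum.cong refl) (auto simp: g_def Theta_def ww_def ex_def add.assoc)
  ultimately have "ml_sum_term n \<alpha> t sums (IT - IF)"
    by (intro has_sum_imp_sums) simp
  then have "(\<lambda>k. ml_sum_term n \<alpha> t (k + n)) sums (IT - IF - (\<Sum>k<n. ml_sum_term n \<alpha> t k))"
    by (rule sums_split_initial_segment)
  moreover have "(\<Sum>k<n. ml_sum_term n \<alpha> t k) = 0"
    by (intro sum.neutral) (auto simp: ml_sum_term_def Theta_empty)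
  moreover have "IT - IF = DD \<alpha> n t"
    unfolding DD_def IT_def IF_def using EE_real(2)[OF apos t] by simp
  ultimately show ?thesis by simp
qed

lemma ennreal_prod_diff:
  fixes x1 x0 y1 y0 :: ennreal
  assumes f: "x1 \<noteq> \<infinity>" "x0 \<noteq> \<infinity>" "y1 \<noteq> \<infinity>" "y0 \<noteq> \<infinity>" and le: "x0 \<le> x1" "y0 \<le> y1"
  shows "ennreal ((enn2real x1 - enn2real x0) * (enn2real y1 - enn2real y0)) = (x1 * y1 + x0 * y0) - (x0 * y1 + x1 * y0)"
    and "x0 * y1 + x1 * y0 \<le> x1 * y1 + x0 * y0"
proof -
  obtain r1 where r1: "x1 = ennreal r1" "0 \<le> r1" using f(1) by (cases x1 rule: ennreal_cases) auto
  obtain r0 where r0: "x0 = ennreal r0" "0 \<le> r0" using f(2) by (cases x0 rule: ennreal_cases) auto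
  obtain s1 where s1: "y1 = ennreal s1" "0 \<le> s1" using f(3) by (cases y1 rule: ennreal_cases) auto
  obtain s0 where s0: "y0 = ennreal s0" "0 \<le> s0" using f(4) by (cases y0 rule: ennreal_cases) auto
  have rr: "r0 \<le> r1" "s0 \<le> s1" using le r1 r0 s1 s0 by auto
  have p: "0 \<le> (r1 - r0) * (s1 - s0)" using rr by simp
  have e1: "x1 * y1 + x0 * y0 = ennreal (r1 * s1 + r0 * s0)"
    using r1 r0 s1 s0 by (simp add: ennreal_mult ennreal_plus)
  have e2: "x0 * y1 + x1 * y0 = ennreal (r0 * s1 + r1 * s0)"
    using r1 r0 s1 s0 by (simp add: ennreal_mult ennreal_plus)
  have le2: "r0 * s1 + r1 * s0 \<le> r1 * s1 + r0 * s0" using p by (simp add: algebra_simps)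
  show "x0 * y1 + x1 * y0 \<le> x1 * y1 + x0 * y0" unfolding e1 e2 using le2 by (rule ennreal_leI)
  have "(x1 * y1 + x0 * y0) - (x0 * y1 + x1 * y0) = ennreal (r1 * s1 + r0 * s0 - (r0 * s1 + r1 * s0))"
    unfolding e1 e2 using r1 r0 s1 s0 by (intro ennreal_minus) (auto intro: add_nonneg_nonneg)
  also have "r1 * s1 + r0 * s0 - (r0 * s1 + r1 * s0) = (r1 - r0) * (s1 - s0)" by (simp add: algebra_simps)
  finally show "ennreal ((enn2real x1 - enn2real x0) * (enn2real y1 - enn2real y0)) = (x1 * y1 + x0 * y0) - (x0 * y1 + x1 * y0)"
    using r1 r0 s1 s0 by simp
qed

lemma (in prob_space) conv_step:
  assumes S: "distributed M lborel S (\<lambda>t. ennreal (if 0 < t then DD \<alpha> m t else 0))"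
    and Y: "distributed M lborel Y (\<lambda>t. ennreal (if 0 < t then fa (\<alpha> (Suc m)) t else 0))"
    and ind: "indep_var borel S borel Y"
    and apos: "\<And>j. j \<in> {1..Suc m} \<Longrightarrow> 0 < \<alpha> j"
    and Dnn: "\<And>t. 0 < t \<Longrightarrow> EE \<alpha> m False t \<le> EE \<alpha> m True t"
    and fnn: "\<And>t. 0 < t \<Longrightarrow> 0 \<le> fa (\<alpha> (Suc m)) t"
  shows "distributed M lborel (\<lambda>\<omega>. S \<omega> + Y \<omega>) (\<lambda>t. ennreal (if 0 < t then DD \<alpha> (Suc m) t else 0))"
    and "\<And>t. 0 < t \<Longrightarrow> EE \<alpha> (Suc m) False t \<le> EE \<alpha> (Suc m) True t"
proof -
  define a where "a = \<alpha> (Suc m)"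
  have a: "a > 0" using apos by (simp add: a_def)
  have apos_m: "\<And>j. j \<in> {1..m} \<Longrightarrow> 0 < \<alpha> j" using apos by auto
  have nn: "\<And>j. j \<in> {1..m} \<Longrightarrow> 0 \<le> \<alpha> j" using apos_m by (auto intro: less_imp_le)
  have EEf: "EE \<alpha> m s t \<noteq> \<infinity>" if "0 < t" for s t by (rule EE_fin[OF apos_m that])
  have EEf': "EE \<alpha> (Suc m) s t \<noteq> \<infinity>" if "0 < t" for s t by (rule EE_fin[OF apos that])
  have FFf: "FF a s t \<noteq> \<infinity>" if "0 < t" for s t by (rule FF_fin[OF a that])
  have FFle: "FF a False t \<le> FF a True t" if "0 < t" for t
  proof -
    have "0 \<le> enn2real (FF a True t) - enn2real (FF a False t)"
      using FF_real[OF a that] fnn[OF that] by (simp add: a_def)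
    then have "ennreal (enn2real (FF a False t)) \<le> ennreal (enn2real (FF a True t))"
      by (intro ennreal_leI) simp
    then show ?thesis using FFf[OF that, of True] FFf[OF that, of False]
      by (simp add: ennreal_enn2real_if)
  qed
  define A where "A z y = EE \<alpha> m True (z - y) * FF a True y + EE \<alpha> m False (z - y) * FF a False y" for z y
  define B where "B z y = EE \<alpha> m False (z - y) * FF a True y + EE \<alpha> m True (z - y) * FF a False y" for z y
  have Am: "A z \<in> borel_measurable lborel" "B z \<in> borel_measurable lborel" for z
    unfolding A_def[abs_def] B_def[abs_def] by measurable
  have recA: "(\<integral>\<^sup>+y. indicator {0<..<z} y * A z y \<partial>lborel) = EE \<alpha> (Suc m) True z" if "0 < z" for z
    using EE_rec[OF that, of \<alpha> m True] apos nn by (simp add: A_def a_def)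
  have recB: "(\<integral>\<^sup>+y. indicator {0<..<z} y * B z y \<partial>lborel) = EE \<alpha> (Suc m) False z" if "0 < z" for z
    using EE_rec[OF that, of \<alpha> m False] apos nn by (simp add: B_def a_def)
  have pt: "ennreal (if 0 < z - y then DD \<alpha> m (z - y) else 0) * ennreal (if 0 < y then fa a y else 0)
      = indicator {0<..<z} y * A z y - indicator {0<..<z} y * B z y"
    and ptle: "indicator {0<..<z} y * B z y \<le> indicator {0<..<z} y * A z y" for z y
  proof -
    have "(ennreal (if 0 < z - y then DD \<alpha> m (z - y) else 0) * ennreal (if 0 < y then fa a y else 0)
      = indicator {0<..<z} y * A z y - indicator {0<..<z} y * B z y) \<and>
      indicator {0<..<z} y * B z y \<le> indicator {0<..<z} y * A z y"
    proof (cases "y \<in> {0<..<z}")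
      case True
      then have y: "0 < z - y" "0 < y" by auto
      have D0: "0 \<le> DD \<alpha> m (z - y)"
        using enn2real_mono[OF Dnn[OF y(1)]] EEf[OF y(1), of True] by (simp add: DD_def top.not_eq_extremum)
      have "ennreal (DD \<alpha> m (z - y)) * ennreal (fa a y) = ennreal (DD \<alpha> m (z - y) * fa a y)"
        using D0 fnn[OF y(2)] by (simp add: ennreal_mult a_def)
      also have "\<dots> = A z y - B z y"
        unfolding DD_def FF_real[OF a y(2), symmetric] A_def B_def
        by (rule ennreal_prod_diff(1)[OF EEf[OF y(1)] EEf[OF y(1)] FFf[OF y(2)] FFf[OF y(2)] Dnn[OF y(1)] FFle[OF y(2)]])
      finally show ?thesis using True y
        by (simp add: A_def B_def ennreal_prod_diff(2)[OF EEf[OF y(1)] EEf[OF y(1)] FFf[OF y(2)] FFf[OF y(2)] Dnn[OF y(1)] FFle[OF y(2)]])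
    next
      case False
      then show ?thesis by (auto simp: indicator_def)
    qed
    then show "ennreal (if 0 < z - y then DD \<alpha> m (z - y) else 0) * ennreal (if 0 < y then fa a y else 0)
      = indicator {0<..<z} y * A z y - indicator {0<..<z} y * B z y"
      and "indicator {0<..<z} y * B z y \<le> indicator {0<..<z} y * A z y" by auto
  qed
  have dens: "(\<integral>\<^sup>+y. ennreal (if 0 < z - y then DD \<alpha> m (z - y) else 0) * ennreal (if 0 < y then fa a y else 0) \<partial>lborel)
      = ennreal (if 0 < z then DD \<alpha> (Suc m) z else 0)
      \<and> (0 < z \<longrightarrow> EE \<alpha> (Suc m) False z \<le> EE \<alpha> (Suc m) True z)" for z
  proof (cases "0 < z")
    case False
    then have "(\<lambda>y. ennreal (if 0 < z - y then DD \<alpha> m (z - y) else 0) * ennreal (if 0 < y then fa a y else 0)) = (\<lambda>y. 0)"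
      by (auto simp: fun_eq_iff)
    then show ?thesis using False by (simp only:) simp
  next
    case True
    have le: "EE \<alpha> (Suc m) False z \<le> EE \<alpha> (Suc m) True z"
      unfolding recA[OF True, symmetric] recB[OF True, symmetric]
      by (intro nn_integral_mono ptle)
    have "(\<integral>\<^sup>+y. ennreal (if 0 < z - y then DD \<alpha> m (z - y) else 0) * ennreal (if 0 < y then fa a y else 0) \<partial>lborel)
        = (\<integral>\<^sup>+y. indicator {0<..<z} y * A z y - indicator {0<..<z} y * B z y \<partial>lborel)"
      by (intro nn_integral_cong) (rule pt)
    also have "\<dots> = (\<integral>\<^sup>+y. indicator {0<..<z} y * A z y \<partial>lborel) - (\<integral>\<^sup>+y. indicator {0<..<z} y * B z y \<partial>lborel)"
      using Am[of z] recB[OF True] EEf'[OF True]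
      by (intro nn_integral_diff) (auto intro!: AE_I2 ptle)
    also have "\<dots> = EE \<alpha> (Suc m) True z - EE \<alpha> (Suc m) False z" by (simp add: recA[OF True] recB[OF True])
    also have "\<dots> = ennreal (DD \<alpha> (Suc m) z)"
    proof -
      have l: "enn2real (EE \<alpha> (Suc m) False z) \<le> enn2real (EE \<alpha> (Suc m) True z)"
        using enn2real_mono[OF le] EEf'[OF True, of True] by (simp add: top.not_eq_extremum)
      show ?thesis
        using EEf'[OF True, of True] EEf'[OF True, of False] l
        by (simp add: DD_def ennreal_minus[symmetric] ennreal_enn2real_if)
    qed
    finally show ?thesis using True le by simp
  qed
  have "distributed M lborel (\<lambda>\<omega>. S \<omega> + Y \<omega>)
     (\<lambda>x. \<integral>\<^sup>+y. ennreal (if 0 < x - y then DD \<alpha> m (x - y) else 0) * ennreal (if 0 < y then fa a y else 0) \<partial>lborel)"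
    unfolding a_def by (rule distributed_convolution[OF ind S Y])
  moreover have "(\<lambda>x. \<integral>\<^sup>+y. ennreal (if 0 < x - y then DD \<alpha> m (x - y) else 0) * ennreal (if 0 < y then fa a y else 0) \<partial>lborel)
      = (\<lambda>t. ennreal (if 0 < t then DD \<alpha> (Suc m) t else 0))"
    using dens by auto
  ultimately show "distributed M lborel (\<lambda>\<omega>. S \<omega> + Y \<omega>) (\<lambda>t. ennreal (if 0 < t then DD \<alpha> (Suc m) t else 0))"
    by simp
  show "\<And>t. 0 < t \<Longrightarrow> EE \<alpha> (Suc m) False t \<le> EE \<alpha> (Suc m) True t" using dens by auto
qed

lemma FF_le:
  assumes a: "a > 0" and t: "t > 0" and f: "0 \<le> fa a t"
  shows "FF a False t \<le> FF a True t"
proof -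
  have "0 \<le> enn2real (FF a True t) - enn2real (FF a False t)"
    using FF_real[OF a t] f by simp
  then have "ennreal (enn2real (FF a False t)) \<le> ennreal (enn2real (FF a True t))"
    by (intro ennreal_leI) simp
  then show ?thesis using FF_fin[OF a t, of True] FF_fin[OF a t, of False]
    by (simp add: ennreal_enn2real_if)
qed

theorem corollary3p3:
  fixes M :: "'a measure" and X :: "nat \<Rightarrow> 'a \<Rightarrow> real"
    and \<alpha> :: "nat \<Rightarrow> real" and n :: nat
  assumes "prob_space M"
    and "\<And>j. j \<le> n \<Longrightarrow> X j \<in> borel_measurable M"
    and "prob_space.indep_vars M (\<lambda>_. borel) X {..n}"
    and "\<alpha> 0 = 1"
    and "\<And>j. j \<le> n \<Longrightarrow> 0 < \<alpha> j \<and> \<alpha> j \<le> 1"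
    and "\<And>j t. j \<le> n \<Longrightarrow>
           measure M {\<omega> \<in> space M. X j \<omega> \<le> t} =
             (if 0 \<le> t then 1 - mittag_leffler (\<alpha> j) (- (t powr \<alpha> j)) else 0)"
  shows "(\<forall>t>0. summable (\<lambda>m. ml_sum_term n \<alpha> t (m + n)))
       \<and> distributed M lborel (\<lambda>\<omega>. \<Sum>j\<le>n. X j \<omega>)
           (\<lambda>t. ennreal (if 0 < t then (\<Sum>m. ml_sum_term n \<alpha> t (m + n)) else 0))"
proof -
  interpret P: prob_space M by (rule assms(1))
  have ind: "P.indep_vars (\<lambda>_. borel) X {..n}" by (rule assms(3))
  have apos: "\<And>j. j \<in> {1..n} \<Longrightarrow> 0 < \<alpha> j" using assms(5) by auto
  have main: "m \<le> n \<Longrightarrow> distributed M lborel (\<lambda>\<omega>. \<Sum>j\<le>m. X j \<omega>) (\<lambda>t. ennreal (if 0 < t then DD \<alpha> m t else 0))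
      \<and> (\<forall>t>0. EE \<alpha> m False t \<le> EE \<alpha> m True t)" for m
  proof (induction m)
    case 0
    have cdf0: "measure M {\<omega> \<in> space M. X 0 \<omega> \<le> t} = (if 0 \<le> t then 1 - mittag_leffler 1 (- (t powr 1)) else 0)" for t
      using assms(6)[of 0 t] assms(4) by simp
    have d: "distributed M lborel (X 0) (\<lambda>t. ennreal (if 0 < t then fa 1 t else 0))"
      by (rule P.mlE_distributed(1)[OF assms(2)[of 0] _ cdf0]) simp_all
    have fnn: "\<And>t. 0 < t \<Longrightarrow> 0 \<le> fa 1 t"
      by (rule P.mlE_distributed(2)[OF assms(2)[of 0] _ cdf0]) simp_all
    have eq: "(\<lambda>t. ennreal (if 0 < t then fa 1 t else 0)) = (\<lambda>t. ennreal (if 0 < t then DD \<alpha> 0 t else 0))"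
      by (auto simp: fun_eq_iff DD_def EE0 FF_real)
    show ?case
      using d fnn unfolding eq by (auto simp: EE0 intro!: FF_le)
  next
    case (Suc m)
    then have IH: "distributed M lborel (\<lambda>\<omega>. \<Sum>j\<le>m. X j \<omega>) (\<lambda>t. ennreal (if 0 < t then DD \<alpha> m t else 0))"
      "\<And>t. 0 < t \<Longrightarrow> EE \<alpha> m False t \<le> EE \<alpha> m True t" by auto
    have sm: "Suc m \<le> n" by (rule Suc.prems)
    have a: "0 < \<alpha> (Suc m)" using assms(5)[OF sm] by simp
    have cdfS: "measure M {\<omega> \<in> space M. X (Suc m) \<omega> \<le> t} = (if 0 \<le> t then 1 - mittag_leffler (\<alpha> (Suc m)) (- (t powr \<alpha> (Suc m))) else 0)" for t
      by (rule assms(6)[OF sm])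
    have dY: "distributed M lborel (X (Suc m)) (\<lambda>t. ennreal (if 0 < t then fa (\<alpha> (Suc m)) t else 0))"
      by (rule P.mlE_distributed(1)[OF assms(2)[OF sm] a cdfS])
    have fnn: "\<And>t. 0 < t \<Longrightarrow> 0 \<le> fa (\<alpha> (Suc m)) t"
      by (rule P.mlE_distributed(2)[OF assms(2)[OF sm] a cdfS])
    have indv: "P.indep_var borel (\<lambda>\<omega>. \<Sum>j\<le>m. X j \<omega>) borel (X (Suc m))"
    proof -
      have r: "P.indep_var (PiM {..m} (\<lambda>_. borel)) (\<lambda>\<omega>. restrict (\<lambda>i. X i \<omega>) {..m})
                 (PiM {Suc m} (\<lambda>_. borel)) (\<lambda>\<omega>. restrict (\<lambda>i. X i \<omega>) {Suc m})"
        by (rule P.indep_var_restrict[OF ind]) (use sm in auto)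
      have m1: "(\<lambda>f. \<Sum>j\<le>m. f j) \<in> measurable (PiM {..m} (\<lambda>_. borel)) (borel :: real measure)"
        by measurable
      have m2: "(\<lambda>f. f (Suc m)) \<in> measurable (PiM {Suc m} (\<lambda>_. borel)) (borel :: real measure)"
        by measurable
      have "P.indep_var borel ((\<lambda>f. \<Sum>j\<le>m. f j) \<circ> (\<lambda>\<omega>. restrict (\<lambda>i. X i \<omega>) {..m}))
                 borel ((\<lambda>f. f (Suc m)) \<circ> (\<lambda>\<omega>. restrict (\<lambda>i. X i \<omega>) {Suc m}))"
        by (rule P.indep_var_compose[OF r m1 m2])
      moreover have "((\<lambda>f. \<Sum>j\<le>m. f j) \<circ> (\<lambda>\<omega>. restrict (\<lambda>i. X i \<omega>) {..m})) = (\<lambda>\<omega>. \<Sum>j\<le>m. X j \<omega>)"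
        by (auto simp: fun_eq_iff intro!: sum.cong)
      moreover have "((\<lambda>f. f (Suc m)) \<circ> (\<lambda>\<omega>. restrict (\<lambda>i. X i \<omega>) {Suc m})) = X (Suc m)"
        by (auto simp: fun_eq_iff)
      ultimately show ?thesis by simp
    qed
    have apos': "\<And>j. j \<in> {1..Suc m} \<Longrightarrow> 0 < \<alpha> j" using apos sm by auto
    note cs = P.conv_step[OF IH(1) dY indv apos' IH(2) fnn]
    have "(\<lambda>\<omega>. (\<Sum>j\<le>m. X j \<omega>) + X (Suc m) \<omega>) = (\<lambda>\<omega>. \<Sum>j\<le>Suc m. X j \<omega>)"
      by (simp add: fun_eq_iff)
    then show ?case using cs by auto
  qed
  have dn: "distributed M lborel (\<lambda>\<omega>. \<Sum>j\<le>n. X j \<omega>) (\<lambda>t. ennreal (if 0 < t then DD \<alpha> n t else 0))"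
    using main[of n] by simp
  have sums: "\<And>t. 0 < t \<Longrightarrow> (\<lambda>k. ml_sum_term n \<alpha> t (k + n)) sums DD \<alpha> n t"
    by (rule series_sums[OF apos])
  have eq: "(\<lambda>t. ennreal (if 0 < t then (\<Sum>m. ml_sum_term n \<alpha> t (m + n)) else 0))
      = (\<lambda>t. ennreal (if 0 < t then DD \<alpha> n t else 0))"
    using sums by (auto simp: fun_eq_iff sums_iff)
  have s: "\<forall>t>0. summable (\<lambda>m. ml_sum_term n \<alpha> t (m + n))"
    using sums sums_summable by blast
  show ?thesis unfolding eq using s dn by (rule conjI)
qed


end
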